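(* Let $d/2<k<d$ be integers with $4k-d-2>(2k-d)^2$, and let $H_*$ be the Hessian matrix of $\varphi$ at $\mathbf b^*$. Then $$\det(-H_* )=\frac{2k^2}{(d-1)(2k-d)^2}\big(4k-d-2-(2k-d)^2\big)\prod_{i=0}^{d-k}\frac1{b_i^*}>0.$$ Furthermore, if $\mathbf b^*$ is the unique global maximum of $\varphi$ on $K$, then $H_*$ is negative definite.
   Context: $\chi_i=\frac{d!}{(k-i)!\,(d-k-i)!\,(i!)^2}$ for $i=0,\dots,d-k$; $b_i^*=(\frac d{2k})^2\binom dk^{-2}\chi_i$. For $\mathbf b\in\mathbb{R}^{d-k+1}$, $\beta_{\mathbf b}=\sum_i b_i$, $\gamma_{\mathbf b}=\sum_i(k-i)b_i$; $K=\{\mathbf b: \frac{d-k}{k}\le\beta_{\mathbf b}\le\frac d{2k},\ b_i\ge0\}$; with $g(x)=x\log x$ ($g(0)=0$), $\varphi(\mathbf b)=g(\gamma_{\mathbf b})+g(d/2-\gamma_{\mathbf b})-2g(\frac{d}{2k}-\beta_{\mathbf b})-g(1-\frac dk+\beta_{\mathbf b})-2\beta_{\mathbf b}\log\binom dk+\sum_i b_i\log\chi_i-\sum_i g(b_i)$. *)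

theory Defs
  imports "Jordan_Normal_Form.Determinant"
begin

text \<open>Vectors b in R^(d-k+1) are represented as functions nat => real; only the
coordinates 0..d-k matter (the set K below additionally requires the other coordinates
to be 0, so that elements of K correspond exactly to vectors in R^(d-k+1)).\<close>

definition chi :: "nat \<Rightarrow> nat \<Rightarrow> nat \<Rightarrow> real" where
  "chi d k i = fact d / (fact (k - i) * fact (d - k - i) * (fact i)^2)"

definition bstar :: "nat \<Rightarrow> nat \<Rightarrow> nat \<Rightarrow> real" where
  "bstar d k i = (if i \<le> d - k then (real d / (2 * real k))^2 / (real (d choose k))^2 * chi d k i else 0)"

definition beta :: "nat \<Rightarrow> nat \<Rightarrow> (nat \<Rightarrow> real) \<Rightarrow> real" where
  "beta d k b = (\<Sum>i=0..d-k. b i)"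

definition gamma :: "nat \<Rightarrow> nat \<Rightarrow> (nat \<Rightarrow> real) \<Rightarrow> real" where
  "gamma d k b = (\<Sum>i=0..d-k. (real k - real i) * b i)"

definition Kset :: "nat \<Rightarrow> nat \<Rightarrow> (nat \<Rightarrow> real) set" where
  "Kset d k = {b. (\<forall>i. d - k < i \<longrightarrow> b i = 0) \<and> (\<forall>i\<le>d-k. 0 \<le> b i) \<and>
      (real d - real k) / real k \<le> beta d k b \<and> beta d k b \<le> real d / (2 * real k)}"

text \<open>g(x) = x log x; note ln 0 = 0 in Isabelle, so g 0 = 0.\<close>
definition g :: "real \<Rightarrow> real" where
  "g x = x * ln x"

definition phi :: "nat \<Rightarrow> nat \<Rightarrow> (nat \<Rightarrow> real) \<Rightarrow> real" where
  "phi d k b = g (gamma d k b) + g (real d / 2 - gamma d k b)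
     - 2 * g (real d / (2 * real k) - beta d k b) - g (1 - real d / real k + beta d k b)
     - 2 * beta d k b * ln (real (d choose k))
     + (\<Sum>i=0..d-k. b i * ln (chi d k i)) - (\<Sum>i=0..d-k. g (b i))"

text \<open>Derivative of a real function (same as HOL-Analysis deriv, which cannot be imported
  alongside Jordan_Normal_Form without name clashes).\<close>
definition rderiv :: "(real \<Rightarrow> real) \<Rightarrow> real \<Rightarrow> real" where
  "rderiv f x = (SOME D. DERIV f x :> D)"

definition partial :: "nat \<Rightarrow> ((nat \<Rightarrow> real) \<Rightarrow> real) \<Rightarrow> (nat \<Rightarrow> real) \<Rightarrow> real" where
  "partial i f b = rderiv (\<lambda>t. f (b(i := t))) (b i)"

definition hessian_entry :: "((nat \<Rightarrow> real) \<Rightarrow> real) \<Rightarrow> (nat \<Rightarrow> real) \<Rightarrow> nat \<Rightarrow> nat \<Rightarrow> real" where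
  "hessian_entry f b i j = partial i (partial j f) b"

definition hessian_mat :: "nat \<Rightarrow> ((nat \<Rightarrow> real) \<Rightarrow> real) \<Rightarrow> (nat \<Rightarrow> real) \<Rightarrow> real mat" where
  "hessian_mat n f b = mat n n (\<lambda>(i, j). hessian_entry f b i j)"

definition negative_definite :: "real mat \<Rightarrow> bool" where
  "negative_definite A \<longleftrightarrow> A \<in> carrier_mat (dim_row A) (dim_row A) \<and>
     (\<forall>x \<in> carrier_vec (dim_row A). x \<noteq> 0\<^sub>v (dim_row A) \<longrightarrow> x \<bullet> (A *\<^sub>v x) < 0)"

end

theory Submission
  imports Defs
begin


lemma chi_binom:
  assumes "k < d" "d - k < k" "i \<le> d - k"
  shows "chi d k i = real (d choose k) * real (k choose i) * real ((d-k) choose i)"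
proof -
  have ik: "i \<le> k" using assms by linarith
  have "fact d = (d choose k) * (fact k * fact (d-k))"
    using binomial_fact_lemma[of k d] assms by (simp add: algebra_simps)
  also have "fact k = (k choose i) * fact i * fact (k-i)"
    using binomial_fact_lemma[of i k] ik by (simp add: algebra_simps)
  also have "fact (d-k) = ((d-k) choose i) * fact i * fact (d-k-i)"
    using binomial_fact_lemma[of i "d-k"] assms by (simp add: algebra_simps)
  finally have e: "fact d = (d choose k) * (((k choose i) * fact i * fact (k-i)) * (((d-k) choose i) * fact i * fact (d-k-i)))" .
  have "(fact d :: real) = real ((d choose k) * (((k choose i) * fact i * fact (k-i)) * (((d-k) choose i) * fact i * fact (d-k-i))))"
    by (subst e[symmetric]) (simp add: of_nat_fact)
  then show ?thesis unfolding chi_def by (simp add: of_nat_fact field_simps power2_eq_square)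
qed

lemma vand_n: "(\<Sum>i=0..n. (m choose i) * (n choose i)) = (m + n) choose n"
proof -
  have "(\<Sum>i=0..n. (m choose i) * (n choose i)) = (\<Sum>i\<le>n. (m choose i) * (n choose (n - i)))"
    by (rule sum.cong) (auto simp: atLeast0AtMost intro: binomial_symmetric)
  also have "\<dots> = (m + n) choose n" by (rule vandermonde)
  finally show ?thesis .
qed

lemma sum1_nat:
  assumes "k < d" "d - k < k"
  shows "(\<Sum>i=0..d-k. (k choose i) * ((d-k) choose i)) = d choose k"
proof -
  have "(\<Sum>i=0..d-k. (k choose i) * ((d-k) choose i)) = (k + (d-k)) choose (d-k)" by (rule vand_n)
  also have "\<dots> = d choose k" using assms by (simp add: binomial_symmetric[symmetric])
  finally show ?thesis .
qed

lemma sum2_nat: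
  assumes "k < d" "d - k < k"
  shows "(\<Sum>i=0..d-k. (k - i) * (k choose i) * ((d-k) choose i)) = k * ((d - 1) choose (k - 1))"
proof -
  have "(\<Sum>i=0..d-k. (k - i) * (k choose i) * ((d-k) choose i)) = (\<Sum>i=0..d-k. k * (((k-1) choose i) * ((d-k) choose i)))"
    by (rule sum.cong) (auto simp: binomial_absorb_comp)
  also have "\<dots> = k * ((k - 1 + (d-k)) choose (d-k))" by (simp add: sum_distrib_left[symmetric] vand_n)
  also have "(k - 1 + (d-k)) choose (d-k) = (d - 1) choose (k - 1)"
    using assms by (subst binomial_symmetric) (auto simp: algebra_simps)
  finally show ?thesis .
qed

lemma sum3_nat:
  assumes "k < d" "d - k < k"
  shows "(\<Sum>i=0..d-k. (k - i) * (k - 1 - i) * (k choose i) * ((d-k) choose i)) = k * (k - 1) * ((d - 2) choose (k - 2))"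
proof -
  have "(\<Sum>i=0..d-k. (k - i) * (k - 1 - i) * (k choose i) * ((d-k) choose i)) = (\<Sum>i=0..d-k. k * (k - 1) * (((k-2) choose i) * ((d-k) choose i)))"
  proof (rule sum.cong)
    fix i assume "i \<in> {0..d-k}"
    have "(k - i) * (k - 1 - i) * (k choose i) = (k - 1 - i) * ((k - i) * (k choose i))" by simp
    also have "\<dots> = k * ((k - 1 - i) * ((k - 1) choose i))" by (simp add: binomial_absorb_comp)
    also have "(k - 1 - i) * ((k - 1) choose i) = (k - 1) * ((k-2) choose i)"
      using binomial_absorb_comp[of "k-1" i] by (simp add: diff_diff_add numeral_2_eq_2)
    finally show "(k - i) * (k - 1 - i) * (k choose i) * ((d-k) choose i) = k * (k - 1) * (((k-2) choose i) * ((d-k) choose i))"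
      by simp
  qed simp
  also have "\<dots> = k * (k - 1) * ((k - 2 + (d-k)) choose (d-k))" by (simp add: sum_distrib_left[symmetric] vand_n)
  also have "(k - 2 + (d-k)) choose (d-k) = (d - 2) choose (k - 2)"
  proof -
    have a: "k - 2 + (d-k) = d - 2" using assms by arith
    have b: "d - 2 - (d-k) = k-2" using assms by arith
    show ?thesis unfolding a using binomial_symmetric[of "d-k" "d-2"] assms b by simp
  qed
  finally show ?thesis .
qed

lemma sums_real:
  assumes "k < d" "d - k < k"
  defines "C \<equiv> real (d choose k)"
  shows "(\<Sum>i=0..d-k. chi d k i) = C^2"
    and "(\<Sum>i=0..d-k. (real k - real i) * chi d k i) = C^2 * real k ^ 2 / real d"
    and "(\<Sum>i=0..d-k. (real k - real i)^2 * chi d k i) = C^2 * (real k^2 * (real k - 1)^2 / (real d * (real d - 1)) + real k ^ 2 / real d)"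
proof -
  have ch: "chi d k i = C * real (k choose i) * real ((d-k) choose i)" if "i \<in> {0..d-k}" for i
    using chi_binom[OF assms(1,2)] that unfolding C_def by auto
  have kd: "real k * C = real d * real ((d-1) choose (k-1))"
    using times_binomial_minus1_eq[of k d] assms unfolding C_def by (metis of_nat_mult gr_zeroI less_nat_zero_code)
  have kd2: "(real k - 1) * real ((d-1) choose (k-1)) = (real d - 1) * real ((d-2) choose (k-2))"
  proof -
    have "(k-1) * ((d-1) choose (k-1)) = (d-1) * ((d-1-1) choose (k-1-1))"
      using times_binomial_minus1_eq[of "k-1" "d-1"] assms by simp
    moreover have "d-1-1 = d-2" "k-1-1 = k-2" by auto
    ultimately have "real (k-1) * real ((d-1) choose (k-1)) = real (d-1) * real ((d-2) choose (k-2))"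
      by (metis of_nat_mult)
    thus ?thesis using assms by (simp add: of_nat_diff)
  qed
  have d0: "real d > 0" "real d - 1 > 0" using assms by auto
  show "(\<Sum>i=0..d-k. chi d k i) = C^2"
  proof -
    have "(\<Sum>i=0..d-k. chi d k i) = (\<Sum>i=0..d-k. C * real ((k choose i) * ((d-k) choose i)))"
      by (rule sum.cong) (simp_all add: ch)
    also have "\<dots> = C * real (\<Sum>i=0..d-k. (k choose i) * ((d-k) choose i))"
      by (simp add: sum_distrib_left)
    also have "\<dots> = C^2" using sum1_nat[OF assms(1,2)] unfolding C_def by (simp add: power2_eq_square)
    finally show ?thesis .
  qed
  have s1: "(\<Sum>i=0..d-k. (real k - real i) * chi d k i) = C * real k * real ((d - 1) choose (k - 1))"
  proof -
    have "(\<Sum>i=0..d-k. (real k - real i) * chi d k i) = (\<Sum>i=0..d-k. C * real ((k - i) * (k choose i) * ((d-k) choose i)))"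
      by (rule sum.cong) (use assms in \<open>auto simp: ch of_nat_diff\<close>)
    also have "\<dots> = C * real (\<Sum>i=0..d-k. (k - i) * (k choose i) * ((d-k) choose i))"
      by (simp add: sum_distrib_left)
    also have "\<dots> = C * real k * real ((d - 1) choose (k - 1))" using sum2_nat[OF assms(1,2)] by simp
    finally show ?thesis .
  qed
  then show "(\<Sum>i=0..d-k. (real k - real i) * chi d k i) = C^2 * real k ^ 2 / real d"
    using kd d0 by (simp add: field_simps power2_eq_square)
  have s2: "(\<Sum>i=0..d-k. (real k - real i) * (real k - 1 - real i) * chi d k i) = C * real k * (real k - 1) * real ((d - 2) choose (k - 2))"
  proof -
    have "(\<Sum>i=0..d-k. (real k - real i) * (real k - 1 - real i) * chi d k i) = (\<Sum>i=0..d-k. C * real ((k - i) * (k - 1 - i) * (k choose i) * ((d-k) choose i)))"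
      by (rule sum.cong) (use assms in \<open>auto simp: ch of_nat_diff\<close>)
    also have "\<dots> = C * real (\<Sum>i=0..d-k. (k - i) * (k - 1 - i) * (k choose i) * ((d-k) choose i))"
      by (simp add: sum_distrib_left)
    also have "\<dots> = C * real k * (real k - 1) * real ((d - 2) choose (k - 2))" using sum3_nat[OF assms(1,2)] assms by (simp add: of_nat_diff)
    finally show ?thesis .
  qed
  have "(\<Sum>i=0..d-k. (real k - real i)^2 * chi d k i) = (\<Sum>i=0..d-k. (real k - real i) * (real k - 1 - real i) * chi d k i) + (\<Sum>i=0..d-k. (real k - real i) * chi d k i)"
    by (simp add: sum.distrib[symmetric] power2_eq_square algebra_simps)
  also have "\<dots> = C * real k * (real k - 1) * real ((d - 2) choose (k - 2)) + C * real k * real ((d - 1) choose (k - 1))"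
    using s1 s2 by simp
  finally have eq: "(\<Sum>i=0..d-k. (real k - real i)^2 * chi d k i) = C * real k * (real k - 1) * real ((d - 2) choose (k - 2)) + C * real k * real ((d - 1) choose (k - 1))" .
  have X: "real ((d - 1) choose (k - 1)) = real k * C / real d" using kd d0 by (simp add: field_simps)
  have Y: "real ((d - 2) choose (k - 2)) = (real k - 1) * (real k * C / real d) / (real d - 1)" 
  proof -
    have "real ((d - 2) choose (k - 2)) = (real k - 1) * real ((d - 1) choose (k - 1)) / (real d - 1)"
      using kd2 d0 by (simp add: field_simps)
    thus ?thesis unfolding X .
  qed
  show "(\<Sum>i=0..d-k. (real k - real i)^2 * chi d k i) = C^2 * (real k^2 * (real k - 1)^2 / (real d * (real d - 1)) + real k ^ 2 / real d)"
    unfolding eq X Y using d0 by (simp add: field_simps power2_eq_square)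
qed

lemma sum_upd:
  fixes h :: "nat \<Rightarrow> real \<Rightarrow> real" and b :: "nat \<Rightarrow> real"
  assumes "finite A" "j \<in> A"
  shows "(\<Sum>i\<in>A. h i ((b(j:=s)) i)) = (\<Sum>i\<in>A. h i (b i)) - h j (b j) + h j s"
proof -
  have "(\<Sum>i\<in>A. h i ((b(j:=s)) i)) = h j s + (\<Sum>i\<in>A-{j}. h i ((b(j:=s)) i))"
    using assms by (simp add: sum.remove)
  also have "(\<Sum>i\<in>A-{j}. h i ((b(j:=s)) i)) = (\<Sum>i\<in>A-{j}. h i (b i))"
    by (rule sum.cong) auto
  also have "\<dots> = (\<Sum>i\<in>A. h i (b i)) - h j (b j)"
    using assms by (simp add: sum.remove[of A j])
  finally show ?thesis by simp
qed

lemma rderiv_eq: "DERIV f x :> D \<Longrightarrow> rderiv f x = D"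
  unfolding rderiv_def by (rule some_equality) (auto intro: DERIV_unique)

lemma DERIV_g_chain[derivative_intros]:
  assumes "(f has_real_derivative f') (at x within S)" "0 < f x"
  shows "((\<lambda>x. g (f x)) has_real_derivative (ln (f x) + 1) * f') (at x within S)"
proof -
  have "(g has_real_derivative (ln (f x) + 1)) (at (f x))"
    unfolding g_def using assms(2) by (auto intro!: derivative_eq_intros)
  thus ?thesis using DERIV_chain2[OF _ assms(1)] by blast
qed

definition Upos :: "nat \<Rightarrow> nat \<Rightarrow> (nat \<Rightarrow> real) \<Rightarrow> bool" where
  "Upos d k b \<longleftrightarrow> 0 < gamma d k b \<and> 0 < real d / 2 - gamma d k b \<and> 0 < real d / (2 * real k) - beta d k b
     \<and> 0 < 1 - real d / real k + beta d k b \<and> (\<forall>i\<le>d-k. 0 < b i)"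

definition Fj :: "nat \<Rightarrow> nat \<Rightarrow> nat \<Rightarrow> (nat \<Rightarrow> real) \<Rightarrow> real" where
  "Fj d k j b = (real k - real j) * ln (gamma d k b) - (real k - real j) * ln (real d / 2 - gamma d k b)
     + 2 * ln (real d / (2 * real k) - beta d k b) - ln (1 - real d / real k + beta d k b)
     - 2 * ln (real (d choose k)) + ln (chi d k j) - ln (b j)"

lemma gamma_upd: "j \<le> d - k \<Longrightarrow> gamma d k (b(j:=t)) = gamma d k b - (real k - real j) * b j + (real k - real j) * t"
  unfolding gamma_def by (subst sum_upd[where h="\<lambda>i x. (real k - real i) * x"]) auto

lemma beta_upd: "j \<le> d - k \<Longrightarrow> beta d k (b(j:=t)) = beta d k b - b j + t"
  unfolding beta_def by (subst sum_upd[where h="\<lambda>i x. x"]) auto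

lemma phi_upd: "j \<le> d - k \<Longrightarrow> phi d k (b(j:=t)) =
   g (gamma d k b - (real k - real j) * b j + (real k - real j) * t)
   + g (real d / 2 - (gamma d k b - (real k - real j) * b j + (real k - real j) * t))
   - 2 * g (real d / (2 * real k) - (beta d k b - b j + t)) - g (1 - real d / real k + (beta d k b - b j + t))
   - 2 * (beta d k b - b j + t) * ln (real (d choose k))
   + ((\<Sum>i=0..d-k. b i * ln (chi d k i)) - b j * ln (chi d k j) + t * ln (chi d k j))
   - ((\<Sum>i=0..d-k. g (b i)) - g (b j) + g t)"
  unfolding phi_def gamma_upd beta_upd
  by (subst sum_upd[where h="\<lambda>i x. x * ln (chi d k i)"], simp, simp)
     (subst sum_upd[where h="\<lambda>i x. g x"], simp, simp, simp)

lemma partial_phi: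
  assumes j: "j \<le> d - k" and U: "Upos d k b"
  shows "partial j (phi d k) b = Fj d k j b"
  unfolding partial_def
proof (rule rderiv_eq)
  have bj: "0 < b j" using U j unfolding Upos_def by auto
  have p: "0 < gamma d k b" "0 < real d / 2 - gamma d k b" "0 < real d / (2 * real k) - beta d k b"
     "0 < 1 - real d / real k + beta d k b" using U unfolding Upos_def by auto
  have "((\<lambda>t. phi d k (b(j:=t))) has_real_derivative Fj d k j b) (at (b j))"
    unfolding phi_upd[OF j]
    using p bj by (auto intro!: derivative_eq_intros simp: Fj_def algebra_simps)
  thus "DERIV (\<lambda>t. phi d k (b(j := t))) (b j) :> Fj d k j b" .
qed


lemma ev_pos_affine:
  fixes p q x :: real
  assumes "0 < p + q * x"
  shows "eventually (\<lambda>t. 0 < p + q * t) (nhds x)"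
proof -
  have "((\<lambda>t. p + q * t) \<longlongrightarrow> p + q * x) (at x)" by (intro tendsto_intros)
  hence "((\<lambda>t. p + q * t) \<longlongrightarrow> p + q * x) (nhds x)"
    using tendsto_at_iff_tendsto_nhds[of "\<lambda>t. p + q * t" x] by simp
  from order_tendstoD(1)[OF this assms] show ?thesis .
qed

lemma ev_Upos:
  assumes i: "i \<le> d - k" and U: "Upos d k b"
  shows "eventually (\<lambda>t. Upos d k (b(i:=t))) (nhds (b i))"
proof -
  define a where "a = real k - real i"
  have p: "0 < gamma d k b" "0 < real d / 2 - gamma d k b" "0 < real d / (2 * real k) - beta d k b"
     "0 < 1 - real d / real k + beta d k b" "\<forall>l\<le>d-k. 0 < b l" using U unfolding Upos_def by auto
  have e1: "eventually (\<lambda>t. 0 < (gamma d k b - a * b i) + a * t) (nhds (b i))"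
    by (rule ev_pos_affine) (use p in simp)
  have e2: "eventually (\<lambda>t. 0 < (real d / 2 - gamma d k b + a * b i) + (- a) * t) (nhds (b i))"
    by (rule ev_pos_affine) (use p in simp)
  have e3: "eventually (\<lambda>t. 0 < (real d / (2 * real k) - beta d k b + b i) + (-1) * t) (nhds (b i))"
    by (rule ev_pos_affine) (use p in simp)
  have e4: "eventually (\<lambda>t. 0 < (1 - real d / real k + beta d k b - b i) + 1 * t) (nhds (b i))"
    by (rule ev_pos_affine) (use p in simp)
  have e5: "eventually (\<lambda>t. 0 < 0 + 1 * t) (nhds (b i))"
    by (rule ev_pos_affine) (use p i in simp)
  show ?thesis
    by (rule eventually_mono[OF eventually_conj[OF e1 eventually_conj[OF e2 eventually_conj[OF e3 eventually_conj[OF e4 e5]]]]])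
      (use p i in \<open>auto simp: Upos_def gamma_upd beta_upd a_def algebra_simps\<close>)
qed

lemma hess_entry:
  assumes i: "i \<le> d - k" and j: "j \<le> d - k" and U: "Upos d k b"
  shows "hessian_entry (phi d k) b i j =
     (real k - real i) * (real k - real j) * (1 / gamma d k b + 1 / (real d / 2 - gamma d k b))
     - 2 / (real d / (2 * real k) - beta d k b) - 1 / (1 - real d / real k + beta d k b)
     - (if i = j then 1 / b i else 0)"
proof -
  have p: "0 < gamma d k b" "0 < real d / 2 - gamma d k b" "0 < real d / (2 * real k) - beta d k b"
     "0 < 1 - real d / real k + beta d k b" "\<forall>l\<le>d-k. 0 < b l" using U unfolding Upos_def by auto
  have bi: "0 < b i" using p i by auto
  have ev: "eventually (\<lambda>t. partial j (phi d k) (b(i:=t)) = Fj d k j (b(i:=t))) (nhds (b i))"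
    by (rule eventually_mono[OF ev_Upos[OF i U]]) (rule partial_phi[OF j])
  have D: "((\<lambda>t. Fj d k j (b(i:=t))) has_real_derivative
     (real k - real i) * (real k - real j) * (1 / gamma d k b + 1 / (real d / 2 - gamma d k b))
     - 2 / (real d / (2 * real k) - beta d k b) - 1 / (1 - real d / real k + beta d k b)
     - (if i = j then 1 / b i else 0)) (at (b i))"
  proof (cases "i = j")
    case True
    show ?thesis unfolding Fj_def gamma_upd[OF i] beta_upd[OF i] using True p bi
      apply (auto intro!: derivative_eq_intros)
      apply (simp add: algebra_simps add_divide_distrib diff_divide_distrib)
      done
  next
    case False
    show ?thesis unfolding Fj_def gamma_upd[OF i] beta_upd[OF i] using False p bi
      apply (auto intro!: derivative_eq_intros)
      apply (simp add: algebra_simps add_divide_distrib diff_divide_distrib)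
      done
  qed
  show ?thesis
    unfolding hessian_entry_def partial_def[of i]
    by (rule rderiv_eq) (use DERIV_cong_ev[OF refl ev refl] D in blast)
qed


lemma basic_dk:
  assumes "real d / 2 < real k" "k < d"
  shows "d - k < k" "2 \<le> k" "3 \<le> d" "real d - 1 > 0" "2 * real k - real d > 0"
  using assms by linarith+

lemma chi_pos: "i \<le> d - k \<Longrightarrow> 0 < chi d k i"
  unfolding chi_def by simp

lemma bstar_sums:
  assumes h: "real d / 2 < real k" "k < d"
  shows "beta d k (bstar d k) = (real d / (2 * real k))^2"
    and "gamma d k (bstar d k) = real d / 4"
    and "(\<Sum>i=0..d-k. (real k - real i)^2 * bstar d k i) = real d * ((real k - 1)^2 + real d - 1) / (4 * (real d - 1))"
    and "\<And>i. i \<le> d - k \<Longrightarrow> 0 < bstar d k i"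
proof -
  note b = basic_dk[OF h]
  define C where "C = real (d choose k)"
  have C: "C > 0" using h unfolding C_def by simp
  define \<kappa> where "\<kappa> = (real d / (2 * real k))^2 / C^2"
  have bs: "bstar d k i = \<kappa> * chi d k i" if "i \<in> {0..d-k}" for i
    using that unfolding bstar_def \<kappa>_def C_def by simp
  note S = sums_real[OF h(2) b(1), folded C_def]
  show "beta d k (bstar d k) = (real d / (2 * real k))^2"
  proof -
    have "beta d k (bstar d k) = \<kappa> * (\<Sum>i=0..d-k. chi d k i)"
      unfolding beta_def by (simp add: bs sum_distrib_left)
    also have "\<dots> = (real d / (2 * real k))^2" unfolding S \<kappa>_def using C by simp
    finally show ?thesis .
  qed
  show "gamma d k (bstar d k) = real d / 4"
  proof -
    have "gamma d k (bstar d k) = \<kappa> * (\<Sum>i=0..d-k. (real k - real i) * chi d k i)"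
      unfolding gamma_def by (simp add: bs sum_distrib_left algebra_simps)
    also have "\<dots> = real d / 4" unfolding S \<kappa>_def using C b by (simp add: field_simps power2_eq_square)
    finally show ?thesis .
  qed
  show "(\<Sum>i=0..d-k. (real k - real i)^2 * bstar d k i) = real d * ((real k - 1)^2 + real d - 1) / (4 * (real d - 1))"
  proof -
    have "(\<Sum>i=0..d-k. (real k - real i)^2 * bstar d k i) = \<kappa> * (\<Sum>i=0..d-k. (real k - real i)^2 * chi d k i)"
      by (simp add: bs sum_distrib_left algebra_simps)
    also have "\<dots> = real d * ((real k - 1)^2 + real d - 1) / (4 * (real d - 1))"
      unfolding S \<kappa>_def using C b by (simp add: field_simps power2_eq_square)
    finally show ?thesis .
  qed
  show "\<And>i. i \<le> d - k \<Longrightarrow> 0 < bstar d k i"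
  proof -
    fix i assume i: "i \<le> d - k"
    have "0 < \<kappa>" unfolding \<kappa>_def using C b by simp
    thus "0 < bstar d k i" using bs[of i] i chi_pos[OF i] by simp
  qed
qed

lemma det_sylvester:
  fixes X :: "'a :: idom mat"
  assumes X: "X \<in> carrier_mat n m" and Y: "Y \<in> carrier_mat m n"
  shows "det (1\<^sub>m n + X * Y) = det (1\<^sub>m m + Y * X)"
proof -
  define M where "M = four_block_mat (1\<^sub>m n) (-X) Y (1\<^sub>m m)"
  define L where "L = four_block_mat (1\<^sub>m n) (0\<^sub>m n m) (-Y) (1\<^sub>m m)"
  define R where "R = four_block_mat (1\<^sub>m n) X (0\<^sub>m m n) (1\<^sub>m m)"
  have XY: "X * Y \<in> carrier_mat n n" and YX: "Y * X \<in> carrier_mat m m" using X Y by auto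
  have mX: "-X \<in> carrier_mat n m" and mY: "-Y \<in> carrier_mat m n" using X Y by auto
  have cM: "M \<in> carrier_mat (n+m) (n+m)" unfolding M_def using X Y by auto
  have cL: "L \<in> carrier_mat (n+m) (n+m)" unfolding L_def using X Y by auto
  have cR: "R \<in> carrier_mat (n+m) (n+m)" unfolding R_def using X Y by auto
  have eML: "M * L = four_block_mat (1\<^sub>m n + X * Y) (-X) (0\<^sub>m m n) (1\<^sub>m m)"
    unfolding M_def L_def
    apply (subst mult_four_block_mat[OF one_carrier_mat mX Y one_carrier_mat one_carrier_mat zero_carrier_mat mY one_carrier_mat])
    using X Y apply (auto)
    done
  have eMR: "M * R = four_block_mat (1\<^sub>m n) (0\<^sub>m n m) Y (1\<^sub>m m + Y * X)"
    unfolding M_def R_def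
    apply (subst mult_four_block_mat[OF one_carrier_mat mX Y one_carrier_mat one_carrier_mat X zero_carrier_mat one_carrier_mat])
    using X Y apply (auto)
    done
  have dL: "det L = 1" unfolding L_def
    by (subst det_four_block_mat_upper_right_zero[of _ n _ m]) (use Y in auto)
  have dR: "det R = 1" unfolding R_def
    by (subst det_four_block_mat_lower_left_zero[of _ n _ m]) (use X in auto)
  have "det (1\<^sub>m n + X * Y) = det (M * L)" unfolding eML
    by (subst det_four_block_mat_lower_left_zero[of _ n _ m]) (use X XY in auto)
  also have "\<dots> = det M" using det_mult[OF cM cL] dL by simp
  also have "\<dots> = det (M * R)" using det_mult[OF cM cR] dR by simp
  also have "\<dots> = det (1\<^sub>m m + Y * X)" unfolding eMR
    by (subst det_four_block_mat_upper_right_zero[of _ n _ m]) (use Y YX in auto)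
  finally show ?thesis .
qed


lemma det_2x2:
  fixes A :: "'a :: comm_ring_1 mat"
  assumes "A \<in> carrier_mat 2 2"
  shows "det A = A $$ (0,0) * A $$ (1,1) - A $$ (0,1) * A $$ (1,0)"
proof -
  have "det A = (\<Sum>j<2. A $$ (0,j) * cofactor A 0 j)" by (rule laplace_expansion_row[OF assms]) simp
  also have "\<dots> = A $$ (0,0) * cofactor A 0 0 + A $$ (0,1) * cofactor A 0 1"
    by (simp add: numeral_2_eq_2)
  also have "cofactor A 0 0 = A $$ (1,1)" unfolding cofactor_def
    using assms by (subst det_single) (auto simp: mat_delete_def)
  also have "cofactor A 0 1 = - A $$ (1,0)" unfolding cofactor_def
    using assms by (subst det_single) (auto simp: mat_delete_def)
  finally show ?thesis by simp
qed

lemma det_diag_plus_rank2: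
  fixes b a :: "nat \<Rightarrow> real" and c e :: real
  assumes bpos: "\<And>i. i < N \<Longrightarrow> 0 < b i"
  shows "det (mat N N (\<lambda>(i,j). (if i = j then 1 / b i else 0) + c - e * a i * a j))
    = (\<Prod>i<N. 1 / b i) * ((1 + c * (\<Sum>i<N. b i)) * (1 - e * (\<Sum>i<N. a i ^ 2 * b i))
         + c * e * (\<Sum>i<N. a i * b i)^2)"
proof -
  define D where "D = mat N N (\<lambda>(i,j). if i = j then 1 / b i else (0::real))"
  define X where "X = mat N 2 (\<lambda>(i,l). if l = 0 then b i else b i * a i)"
  define V where "V = mat 2 N (\<lambda>(l,j). if l = 0 then c else - e * a j)"
  have cD: "D \<in> carrier_mat N N" and cX: "X \<in> carrier_mat N 2" and cV: "V \<in> carrier_mat 2 N"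
    unfolding D_def X_def V_def by auto
  have eq: "mat N N (\<lambda>(i,j). (if i = j then 1 / b i else 0) + c - e * a i * a j) = D * (1\<^sub>m N + X * V)"
  proof (rule eq_matI)
    fix i j assume i: "i < dim_row (D * (1\<^sub>m N + X * V))" and j: "j < dim_col (D * (1\<^sub>m N + X * V))"
    hence i: "i < N" and j: "j < N" using cD cX cV by auto
    have XV: "(1\<^sub>m N + X * V) $$ (l, j) = (if l = j then 1 else 0) + (b l * c - e * b l * a l * a j)" if "l < N" for l
      using that j unfolding X_def V_def by (simp add: scalar_prod_def numeral_2_eq_2 algebra_simps)
    have "(D * (1\<^sub>m N + X * V)) $$ (i, j) = (\<Sum>l<N. (if i = l then 1 / b i else 0) * (1\<^sub>m N + X * V) $$ (l, j))"
      using i j cD cX cV unfolding D_def by (simp add: scalar_prod_def lessThan_atLeast0)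
    also have "\<dots> = (1 / b i) * (1\<^sub>m N + X * V) $$ (i, j)"
      using i by (simp add: if_distrib[of "\<lambda>x. x * _"] sum.delta cong: if_cong)
    also have "\<dots> = (if i = j then 1 / b i else 0) + c - e * a i * a j"
      using i j bpos[OF i] bpos[OF j] by (subst XV[OF i]) (simp add: field_simps)
    finally show "mat N N (\<lambda>(i,j). (if i = j then 1 / b i else 0) + c - e * a i * a j) $$ (i, j) = (D * (1\<^sub>m N + X * V)) $$ (i, j)"
      using i j by simp
  qed (use cD cX cV in auto)
  have detD: "det D = (\<Prod>i<N. 1 / b i)"
  proof -
    have "det D = prod_list (diag_mat D)"
      by (rule det_upper_triangular[OF _ cD]) (auto simp: D_def upper_triangular_def)
    also have "\<dots> = (\<Prod>i<N. 1 / b i)"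
      unfolding diag_mat_def D_def
      by (simp add: prod.distinct_set_conv_list[symmetric] lessThan_atLeast0 cong: map_cong)
    finally show ?thesis .
  qed
  have VX: "1\<^sub>m 2 + V * X = mat 2 2 (\<lambda>(l,m). if l = 0 then (if m = 0 then 1 + c * (\<Sum>i<N. b i) else c * (\<Sum>i<N. a i * b i))
        else (if m = 0 then - e * (\<Sum>i<N. a i * b i) else 1 - e * (\<Sum>i<N. a i ^ 2 * b i)))"
    by (rule eq_matI) (use cV cX in \<open>auto simp: V_def X_def scalar_prod_def lessThan_atLeast0 sum_distrib_left power2_eq_square algebra_simps less_2_cases_iff sum_negf\<close>)
  have "det (mat N N (\<lambda>(i,j). (if i = j then 1 / b i else 0) + c - e * a i * a j)) = det D * det (1\<^sub>m N + X * V)"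
    unfolding eq by (rule det_mult[OF cD]) (use cX cV in auto)
  also have "det (1\<^sub>m N + X * V) = det (1\<^sub>m 2 + V * X)" by (rule det_sylvester[OF cX cV])
  also have "\<dots> = (1 + c * (\<Sum>i<N. b i)) * (1 - e * (\<Sum>i<N. a i ^ 2 * b i)) + c * e * (\<Sum>i<N. a i * b i)^2"
    unfolding VX by (subst det_2x2) (auto simp: power2_eq_square algebra_simps)
  finally show ?thesis unfolding detD .
qed


lemma quad_pos:
  fixes b a x :: "nat \<Rightarrow> real" and c e :: real
  assumes bpos: "\<And>i. i < N \<Longrightarrow> 0 < b i"
    and xnz: "\<exists>i<N. x i \<noteq> 0"
    and Dpos: "0 < (\<Sum>i<N. b i) * (\<Sum>i<N. a i ^ 2 * b i) - (\<Sum>i<N. a i * b i)^2"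
    and Ppos: "0 < (1 + c * (\<Sum>i<N. b i)) * (1 - e * (\<Sum>i<N. a i ^ 2 * b i)) + c * e * (\<Sum>i<N. a i * b i)^2"
    and Apos: "0 < (\<Sum>i<N. a i ^ 2 * b i) + ((\<Sum>i<N. b i) * (\<Sum>i<N. a i ^ 2 * b i) - (\<Sum>i<N. a i * b i)^2) * c"
  shows "0 < (\<Sum>i<N. x i ^ 2 / b i) + c * (\<Sum>i<N. x i)^2 - e * (\<Sum>i<N. a i * x i)^2"
proof -
  define \<beta> where "\<beta> = (\<Sum>i<N. b i)"
  define \<gamma> where "\<gamma> = (\<Sum>i<N. a i * b i)"
  define s where "s = (\<Sum>i<N. a i ^ 2 * b i)"
  define S where "S = (\<Sum>i<N. x i)"
  define T where "T = (\<Sum>i<N. a i * x i)"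
  define Q where "Q = (\<Sum>i<N. x i ^ 2 / b i)"
  define \<Delta> where "\<Delta> = \<beta> * s - \<gamma>^2"
  have D: "0 < \<Delta>" using Dpos unfolding \<Delta>_def \<beta>_def s_def \<gamma>_def .
  have P: "0 < (1 + c * \<beta>) * (1 - e * s) + c * e * \<gamma>^2" using Ppos unfolding \<beta>_def s_def \<gamma>_def .
  have A: "0 < s + \<Delta> * c" using Apos unfolding \<Delta>_def \<beta>_def s_def \<gamma>_def .
  have bound: "2 * (p * S + q * T) - (p^2 * \<beta> + 2 * p * q * \<gamma> + q^2 * s) \<le> Q" for p q
  proof -
    have "0 \<le> (\<Sum>i<N. (x i - b i * (p + q * a i))^2 / b i)"
      by (rule sum_nonneg) (use bpos in \<open>auto intro!: divide_nonneg_pos\<close>)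
    also have "(\<Sum>i<N. (x i - b i * (p + q * a i))^2 / b i)
        = (\<Sum>i<N. x i ^ 2 / b i + (-2 * p) * x i + (- 2 * q) * (a i * x i) + p^2 * b i + (2 * p * q) * (a i * b i) + q^2 * (a i ^ 2 * b i))"
    proof (rule sum.cong)
      fix i assume "i \<in> {..<N}"
      hence bi: "0 < b i" using bpos by auto
      show "(x i - b i * (p + q * a i))^2 / b i = x i ^ 2 / b i + (-2 * p) * x i + (- 2 * q) * (a i * x i) + p^2 * b i + (2 * p * q) * (a i * b i) + q^2 * (a i ^ 2 * b i)"
        using bi by (simp add: field_simps power2_eq_square)
    qed simp
    also have "\<dots> = Q + (-2 * p) * S + (-2 * q) * T + p^2 * \<beta> + (2 * p * q) * \<gamma> + q^2 * s"
      unfolding Q_def S_def T_def \<beta>_def \<gamma>_def s_def by (simp add: sum.distrib sum_distrib_left sum_subtractf sum_negf)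
    finally show ?thesis by simp
  qed
  show ?thesis
  proof (cases "S = 0 \<and> T = 0")
    case True
    obtain i where i: "i < N" "x i \<noteq> 0" using xnz by auto
    have "0 < Q" unfolding Q_def
      by (rule sum_pos2[of _ i]) (use i bpos in \<open>auto intro!: divide_nonneg_pos\<close>)
    thus ?thesis using True unfolding Q_def S_def T_def by simp
  next
    case False
    define p' where "p' = s * S - \<gamma> * T"
    define q' where "q' = \<beta> * T - \<gamma> * S"
    define p where "p = p' / \<Delta>"
    define q where "q = q' / \<Delta>"
    define W where "W = s * S^2 - 2 * \<gamma> * S * T + \<beta> * T^2"
    have n: "2 * \<Delta> * (p' * S + q' * T) - (p'^2 * \<beta> + 2 * p' * q' * \<gamma> + q'^2 * s) = \<Delta> * W"
      unfolding \<Delta>_def p'_def q'_def W_def by (simp add: power2_eq_square algebra_simps)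
    have "2 * (p * S + q * T) - (p^2 * \<beta> + 2 * p * q * \<gamma> + q^2 * s)
       = (2 * \<Delta> * (p' * S + q' * T) - (p'^2 * \<beta> + 2 * p' * q' * \<gamma> + q'^2 * s)) / \<Delta>^2"
      unfolding p_def q_def using D by (simp add: field_simps power2_eq_square)
    also have "\<dots> = W / \<Delta>" unfolding n using D by (simp add: power2_eq_square)
    finally have "2 * (p * S + q * T) - (p^2 * \<beta> + 2 * p * q * \<gamma> + q^2 * s) = (s * S^2 - 2 * \<gamma> * S * T + \<beta> * T^2) / \<Delta>"
      unfolding W_def .
    with bound[of p q] have Qb: "(s * S^2 - 2 * \<gamma> * S * T + \<beta> * T^2) / \<Delta> \<le> Q" by simp
    define num where "num = (s + \<Delta> * c) * S^2 - 2 * \<gamma> * S * T + (\<beta> - e * \<Delta>) * T^2"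
    have key: "(s + \<Delta> * c) * num = ((s + \<Delta> * c) * S - \<gamma> * T)^2 + \<Delta> * ((1 + c * \<beta>) * (1 - e * s) + c * e * \<gamma>^2) * T^2"
      unfolding num_def \<Delta>_def by (simp add: power2_eq_square algebra_simps)
    have "0 < num"
    proof (cases "T = 0")
      case True
      hence "S \<noteq> 0" using False by auto
      thus ?thesis unfolding num_def using True A by simp
    next
      case F: False
      have "0 < \<Delta> * ((1 + c * \<beta>) * (1 - e * s) + c * e * \<gamma>^2) * T^2" using D P F by simp
      hence "0 < (s + \<Delta> * c) * num" unfolding key by (smt (verit) zero_le_power2)
      thus ?thesis using A by (simp add: zero_less_mult_iff)
    qed
    have "(s * S^2 - 2 * \<gamma> * S * T + \<beta> * T^2) / \<Delta> + c * S^2 - e * T^2 = num / \<Delta>"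
      unfolding num_def using D by (simp add: field_simps)
    with Qb \<open>0 < num\<close> D have "0 < Q + c * S^2 - e * T^2"
      by (smt (verit) divide_pos_pos)
    thus ?thesis unfolding Q_def S_def T_def .
  qed
qed


lemma negdef_rank2:
  fixes b a :: "nat \<Rightarrow> real" and c e :: real
  assumes bpos: "\<And>i. i < N \<Longrightarrow> 0 < b i"
    and Dpos: "0 < (\<Sum>i<N. b i) * (\<Sum>i<N. a i ^ 2 * b i) - (\<Sum>i<N. a i * b i)^2"
    and Ppos: "0 < (1 + c * (\<Sum>i<N. b i)) * (1 - e * (\<Sum>i<N. a i ^ 2 * b i)) + c * e * (\<Sum>i<N. a i * b i)^2"
    and Apos: "0 < (\<Sum>i<N. a i ^ 2 * b i) + ((\<Sum>i<N. b i) * (\<Sum>i<N. a i ^ 2 * b i) - (\<Sum>i<N. a i * b i)^2) * c"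
  shows "negative_definite (mat N N (\<lambda>(i,j). e * a i * a j - c - (if i = j then 1 / b i else 0)))"
proof -
  define H where "H = mat N N (\<lambda>(i,j). e * a i * a j - c - (if i = j then 1 / b i else 0))"
  have "negative_definite H"
  unfolding negative_definite_def
proof (intro conjI ballI impI)
  show "H \<in> carrier_mat (dim_row H) (dim_row H)" unfolding H_def by auto
  fix x :: "real vec" assume x: "x \<in> carrier_vec (dim_row H)" and nz: "x \<noteq> 0\<^sub>v (dim_row H)"
  have dH: "dim_row H = N" unfolding H_def by simp
  have dx: "dim_vec x = N" using x dH by auto
  have xnz: "\<exists>i<N. x $ i \<noteq> 0"
  proof (rule ccontr)
    assume "\<not> (\<exists>i<N. x $ i \<noteq> 0)"
    hence "x = 0\<^sub>v N" using dx by (intro eq_vecI) auto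
    thus False using nz dH by simp
  qed
  define S where "S = (\<Sum>j<N. x $ j)"
  define T where "T = (\<Sum>j<N. a j * x $ j)"
  have Hv: "(H *\<^sub>v x) $ i = e * a i * T - c * S - x $ i / b i" if i: "i < N" for i
  proof -
    have "(H *\<^sub>v x) $ i = (\<Sum>j<N. (e * a i * a j - c - (if i = j then 1 / b i else 0)) * x $ j)"
      using i dx unfolding H_def by (simp add: scalar_prod_def lessThan_atLeast0)
    also have "\<dots> = (\<Sum>j<N. (e * a i) * (a j * x $ j) - c * x $ j - (if i = j then x $ i / b i else 0))"
      by (rule sum.cong) (auto simp: algebra_simps)
    also have "\<dots> = e * a i * T - c * S - x $ i / b i"
      using i unfolding S_def T_def by (simp add: sum_subtractf sum_distrib_left)
    finally show ?thesis .
  qed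
  have "x \<bullet> (H *\<^sub>v x) = (\<Sum>i<N. x $ i * (H *\<^sub>v x) $ i)"
    using dH by (simp add: scalar_prod_def lessThan_atLeast0)
  also have "\<dots> = (\<Sum>i<N. e * T * (a i * x $ i) - c * S * x $ i - x $ i ^ 2 / b i)"
    by (rule sum.cong) (auto simp: Hv algebra_simps power2_eq_square)
  also have "\<dots> = - ((\<Sum>i<N. x $ i ^ 2 / b i) + c * S^2 - e * T^2)"
    by (simp add: sum_subtractf sum_distrib_left[symmetric] S_def[symmetric] T_def[symmetric] power2_eq_square)
  finally have eq: "x \<bullet> (H *\<^sub>v x) = - ((\<Sum>i<N. x $ i ^ 2 / b i) + c * S^2 - e * T^2)" .
  have "0 < (\<Sum>i<N. x $ i ^ 2 / b i) + c * (\<Sum>i<N. x $ i)^2 - e * (\<Sum>i<N. a i * x $ i)^2"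
    by (rule quad_pos[OF bpos xnz Dpos Ppos Apos])
  thus "x \<bullet> (H *\<^sub>v x) < 0" unfolding eq S_def T_def by simp
qed
  thus ?thesis unfolding H_def .
qed



lemma vals:
  fixes D K :: real
  assumes K: "0 < K" and D1: "1 < D" and DK: "D < 2 * K" and KD: "K < D"
  defines "t \<equiv> D / (2 * K)"
    and "s2 \<equiv> D * ((K - 1)^2 + D - 1) / (4 * (D - 1))"
    and "e \<equiv> 1 / (D / 4) + 1 / (D / 2 - D / 4)"
    and "c \<equiv> 2 / (D / (2 * K) - (D / (2 * K))^2) + 1 / (1 - D / K + (D / (2 * K))^2)"
  shows "c = 4 * K^2 * (4 * K - D) / (D * (2 * K - D)^2)"
    and "e = 8 / D"
    and "(1 + c * t^2) * (1 - e * s2) + c * e * (D / 4)^2 = 2 * K^2 / ((D - 1) * (2 * K - D)^2) * (4 * K - D - 2 - (2 * K - D)^2)"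
    and "t^2 * s2 - (D / 4)^2 = D^2 * (D - K)^2 / (16 * K^2 * (D - 1))"
    and "0 < c" and "0 < s2"
proof -
  have D0: "0 < D" using D1 by simp
  have E: "2 * K - D > 0" using DK by simp
  have a1: "t - t^2 = D * (2 * K - D) / (4 * K^2)"
    unfolding t_def using K by (simp add: field_simps power2_eq_square)
  have a2: "1 - D / K + t^2 = (2 * K - D)^2 / (4 * K^2)"
    unfolding t_def using K by (simp add: field_simps power2_eq_square)
  show c: "c = 4 * K^2 * (4 * K - D) / (D * (2 * K - D)^2)"
  proof -
    have g: "2 / (D * X / (4 * K^2)) + 1 / (X^2 / (4 * K^2)) = 4 * K^2 * (2 * X + D) / (D * X^2)"
      if "X > 0" for X using that K D0 by (simp add: field_simps power2_eq_square)
    show ?thesis unfolding c_def t_def[symmetric] a1 a2 g[OF E] by (simp add: algebra_simps)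
  qed
  show e: "e = 8 / D" unfolding e_def using D0 by (simp add: field_simps)
  have gen: "(1 + 4 * K^2 * (4 * K - D) / (D * X^2) * (D / (2 * K))^2) * (1 - 8 / D * (D * ((K - 1)^2 + Y) / (4 * Y)))
      + 4 * K^2 * (4 * K - D) / (D * X^2) * (8 / D) * (D / 4)^2 = 2 * K^2 / (Y * X^2) * (4 * K - D - 2 - X^2)"
    if hX: "X = 2 * K - D" and hY: "Y = D - 1" and X0: "X > 0" and Y0: "Y > 0" for X Y
  proof -
    have "(1 + 4 * K^2 * (4 * K - D) / (D * X^2) * (D / (2 * K))^2) * (1 - 8 / D * (D * ((K - 1)^2 + Y) / (4 * Y)))
      + 4 * K^2 * (4 * K - D) / (D * X^2) * (8 / D) * (D / 4)^2 - 2 * K^2 / (Y * X^2) * (4 * K - D - 2 - X^2)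
      = ((X^2 + D * (4 * K - D)) * (Y - 2 * ((K - 1)^2 + Y)) + 2 * K^2 * (4 * K - D) * Y - 2 * K^2 * (4 * K - D - 2 - X^2)) / (X^2 * Y)"
      using X0 Y0 K D0 by (simp add: field_simps power2_eq_square)
    also have "(X^2 + D * (4 * K - D)) * (Y - 2 * ((K - 1)^2 + Y)) + 2 * K^2 * (4 * K - D) * Y - 2 * K^2 * (4 * K - D - 2 - X^2) = 0"
      unfolding hX hY by (simp add: power2_eq_square algebra_simps)
    finally show ?thesis by simp
  qed
  show "(1 + c * t^2) * (1 - e * s2) + c * e * (D / 4)^2 = 2 * K^2 / ((D - 1) * (2 * K - D)^2) * (4 * K - D - 2 - (2 * K - D)^2)"
  proof -
    have s2': "s2 = D * ((K - 1)^2 + (D - 1)) / (4 * (D - 1))" unfolding s2_def by (simp add: add_diff_eq)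
    show ?thesis unfolding c e t_def s2' by (rule gen) (use E D1 in auto)
  qed
  have gen2: "(D / (2 * K))^2 * (D * ((K - 1)^2 + Y) / (4 * Y)) - (D / 4)^2 = D^2 * (D - K)^2 / (16 * K^2 * Y)"
    if hY: "Y = D - 1" and Y0: "Y > 0" for Y
  proof -
    have "(D / (2 * K))^2 * (D * ((K - 1)^2 + Y) / (4 * Y)) - (D / 4)^2 - D^2 * (D - K)^2 / (16 * K^2 * Y)
       = (D^3 * ((K - 1)^2 + Y) - D^2 * K^2 * Y - D^2 * (D - K)^2) / (16 * K^2 * Y)"
      using Y0 K D0 by (simp add: field_simps power2_eq_square power3_eq_cube)
    also have "D^3 * ((K - 1)^2 + Y) - D^2 * K^2 * Y - D^2 * (D - K)^2 = 0"
      unfolding hY by (simp add: power2_eq_square power3_eq_cube algebra_simps)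
    finally show ?thesis by simp
  qed
  show "t^2 * s2 - (D / 4)^2 = D^2 * (D - K)^2 / (16 * K^2 * (D - 1))"
  proof -
    have s2': "s2 = D * ((K - 1)^2 + (D - 1)) / (4 * (D - 1))" unfolding s2_def by (simp add: add_diff_eq)
    show ?thesis unfolding t_def s2' by (rule gen2) (use D1 in auto)
  qed
  show "0 < c" unfolding c using K D0 E DK by (simp add: zero_less_mult_iff)
  show "0 < s2"
  proof -
    have "0 < (K - 1)^2 + D - 1" using D1 zero_le_power2[of "K - 1"] by linarith
    thus ?thesis unfolding s2_def using D1 by (intro divide_pos_pos mult_pos_pos) auto
  qed
qed


theorem lemma12:
  fixes d k :: nat
  assumes "real d / 2 < real k" and "k < d"
    and "4 * real k - real d - 2 > (2 * real k - real d)^2"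
  shows "det (- hessian_mat (d - k + 1) (phi d k) (bstar d k))
           = 2 * (real k)^2 / ((real d - 1) * (2 * real k - real d)^2)
             * (4 * real k - real d - 2 - (2 * real k - real d)^2)
             * (\<Prod>i=0..d-k. 1 / bstar d k i)
       \<and> det (- hessian_mat (d - k + 1) (phi d k) (bstar d k)) > 0
       \<and> ((bstar d k \<in> Kset d k \<and>
            (\<forall>b \<in> Kset d k. b \<noteq> bstar d k \<longrightarrow> phi d k b < phi d k (bstar d k)))
           \<longrightarrow> negative_definite (hessian_mat (d - k + 1) (phi d k) (bstar d k)))"
proof -
  note bd = basic_dk[OF assms(1,2)]
  note bs = bstar_sums[OF assms(1,2)]
  define N where "N = d - k + 1"
  have N: "{..<N} = {0..d-k}" unfolding N_def by auto
  define b where "b = bstar d k"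
  define a where "a = (\<lambda>i::nat. real k - real i)"
  define t where "t = real d / (2 * real k)"
  define s2 where "s2 = real d * ((real k - 1)^2 + real d - 1) / (4 * (real d - 1))"
  define e where "e = 1 / gamma d k b + 1 / (real d / 2 - gamma d k b)"
  define c where "c = 2 / (real d / (2 * real k) - beta d k b) + 1 / (1 - real d / real k + beta d k b)"
  have K0: "0 < real k" and D1: "1 < real d" and DK: "real d < 2 * real k" and KD: "real k < real d"
    using assms bd by auto
  have beta: "beta d k b = t^2" and gamma: "gamma d k b = real d / 4"
    and s2b: "(\<Sum>i=0..d-k. (real k - real i)^2 * b i) = s2"
    and bpos: "\<And>i. i \<le> d - k \<Longrightarrow> 0 < b i"
    using bs unfolding b_def t_def s2_def by auto
  have e_eq: "e = 1 / (real d / 4) + 1 / (real d / 2 - real d / 4)" unfolding e_def gamma ..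
  have c_eq: "c = 2 / (real d / (2 * real k) - (real d / (2 * real k))^2) + 1 / (1 - real d / real k + (real d / (2 * real k))^2)"
    unfolding c_def beta t_def ..
  note V0 = vals[OF K0 D1 DK KD]
  have V3: "(1 + c * t^2) * (1 - e * s2) + c * e * (real d / 4)^2 = 2 * (real k)^2 / ((real d - 1) * (2 * real k - real d)^2) * (4 * real k - real d - 2 - (2 * real k - real d)^2)"
    unfolding e_eq c_eq t_def s2_def by (rule V0(3))
  have V4: "t^2 * s2 - (real d / 4)^2 = real d^2 * (real d - real k)^2 / (16 * real k^2 * (real d - 1))"
    unfolding t_def s2_def by (rule V0(4))
  have V5: "0 < c" unfolding c_eq by (rule V0(5))
  have V6: "0 < s2" unfolding s2_def by (rule V0(6))
  have t01: "0 < t" "t < 1" unfolding t_def using K0 DK D1 by auto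
  have U: "Upos d k b"
  proof -
    have "real d / (2 * real k) - beta d k b = t * (1 - t)" unfolding beta t_def by (simp add: power2_eq_square algebra_simps)
    moreover have "1 - real d / real k + beta d k b = (1 - t)^2" unfolding beta t_def using K0
      by (simp add: power2_eq_square field_simps)
    ultimately show ?thesis unfolding Upos_def gamma using t01 bpos D1 by auto
  qed
  have Hm: "hessian_mat N (phi d k) b = mat N N (\<lambda>(i,j). e * a i * a j - c - (if i = j then 1 / b i else 0))"
  proof (rule eq_matI)
    fix i j assume "i < dim_row (mat N N (\<lambda>(i,j). e * a i * a j - c - (if i = j then 1 / b i else 0)))"
      "j < dim_col (mat N N (\<lambda>(i,j). e * a i * a j - c - (if i = j then 1 / b i else 0)))"
    hence i: "i \<le> d - k" "i < N" and j: "j \<le> d - k" "j < N" unfolding N_def by auto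
    show "hessian_mat N (phi d k) b $$ (i, j) = mat N N (\<lambda>(i,j). e * a i * a j - c - (if i = j then 1 / b i else 0)) $$ (i, j)"
    proof -
      have he: "hessian_entry (phi d k) b i j = a i * a j * e - c - (if i = j then 1 / b i else 0)"
        unfolding hess_entry[OF i(1) j(1) U] e_def[symmetric] c_def a_def by (simp add: diff_diff_eq)
      show ?thesis unfolding hessian_mat_def using i j he by (simp add: mult.commute mult.left_commute)
    qed
  qed (auto simp: hessian_mat_def)
  have negH: "- hessian_mat N (phi d k) b = mat N N (\<lambda>(i,j). (if i = j then 1 / b i else 0) + c - e * a i * a j)"
    unfolding Hm by (rule eq_matI) auto
  have sb: "(\<Sum>i<N. b i) = t^2" unfolding N beta[symmetric] beta_def ..
  have sab: "(\<Sum>i<N. a i * b i) = real d / 4" unfolding N gamma[symmetric] gamma_def a_def ..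
  have sa2b: "(\<Sum>i<N. a i ^ 2 * b i) = s2" unfolding N s2b[symmetric] a_def ..
  have bposN: "\<And>i. i < N \<Longrightarrow> 0 < b i" using bpos unfolding N_def by auto
  define P where "P = 2 * (real k)^2 / ((real d - 1) * (2 * real k - real d)^2) * (4 * real k - real d - 2 - (2 * real k - real d)^2)"
  have Pv: "(1 + c * (\<Sum>i<N. b i)) * (1 - e * (\<Sum>i<N. a i ^ 2 * b i)) + c * e * (\<Sum>i<N. a i * b i)^2 = P"
    unfolding sb sab sa2b P_def by (rule V3)
  have Ppos: "0 < P" unfolding P_def using assms(3) D1 DK by (intro mult_pos_pos divide_pos_pos) auto
  have detH: "det (- hessian_mat N (phi d k) b) = (\<Prod>i<N. 1 / b i) * P"
    unfolding negH using det_diag_plus_rank2[OF bposN, where c=c and e=e and a=a] Pv by simp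
  have prodpos: "0 < (\<Prod>i<N. 1 / b i)" using bposN by (intro prod_pos) auto
  have Dv: "(\<Sum>i<N. b i) * (\<Sum>i<N. a i ^ 2 * b i) - (\<Sum>i<N. a i * b i)^2 = real d^2 * (real d - real k)^2 / (16 * real k^2 * (real d - 1))"
    unfolding sb sab sa2b by (rule V4)
  have Dpos: "0 < (\<Sum>i<N. b i) * (\<Sum>i<N. a i ^ 2 * b i) - (\<Sum>i<N. a i * b i)^2"
    unfolding Dv using KD D1 K0 by (intro divide_pos_pos mult_pos_pos) auto
  have Apos: "0 < (\<Sum>i<N. a i ^ 2 * b i) + ((\<Sum>i<N. b i) * (\<Sum>i<N. a i ^ 2 * b i) - (\<Sum>i<N. a i * b i)^2) * c"
    using Dpos V5 V6 unfolding sa2b by (simp add: add_pos_pos)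
  have ND: "negative_definite (hessian_mat N (phi d k) b)"
    unfolding Hm using Pv Ppos by (intro negdef_rank2[OF _ Dpos _ Apos]) (auto intro: bposN)
  have eq1: "det (- hessian_mat N (phi d k) b) = P * (\<Prod>i=0..d-k. 1 / b i)"
    using detH unfolding N by (simp add: mult.commute)
  have pos: "0 < det (- hessian_mat N (phi d k) b)" using detH prodpos Ppos by simp
  show ?thesis using eq1 pos ND unfolding P_def N_def b_def by blast
qed

end
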